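(* Let $L$ be a (right) Leibniz algebra and $B\neq\{0\}$ an ideal of $L$. Let $P_0=a_ma_{m-1}\cdots a_2a_1$ be a right product of elements $a_1,\dots,a_m\in L$ such that at least $n\geq 1$ of the factors $a_i$ belong to $B$. Then $P_0\in B_n$, where $B_1=B$ and $B_k=B^k+\mathrm{Es}(B)$ for $k\geq 2$.
   Context: A (right) Leibniz algebra is a vector space $L$ over a field $F$ (characteristic $\neq 2$, finite-dimensional) with a bilinear product $(x,y)\mapsto xy$ satisfying $x(yz)=(xy)z-(xz)y$ for all $x,y,z\in L$. For subspaces $U,V$, $UV$ is the span of all $uv$. An ideal is a subspace $B$ with $LB\subseteq B$, $BL\subseteq B$. Right powers: $B^1=B$, $B^{k+1}=B^kB$. $\mathrm{Ess}(L)$ is the ideal generated by all squares $xx$, and $\mathrm{Es}(B)=B\cap\mathrm{Ess}(L)$. Right product: $a_ma_{m-1}\cdots a_1:=((\cdots((a_ma_{m-1})a_{m-2})\cdots)a_2)a_1$. *)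

theory Defs
  imports Complex_Main
begin

definition leibniz_algebra ::
  "('f::field \<Rightarrow> 'v::ab_group_add \<Rightarrow> 'v) \<Rightarrow> ('v \<Rightarrow> 'v \<Rightarrow> 'v) \<Rightarrow> bool" where
  "leibniz_algebra scale mult \<longleftrightarrow>
     vector_space scale \<and>
     (2::'f) \<noteq> 0 \<and>
     (\<exists>S. finite S \<and> module.span scale S = UNIV) \<and>
     (\<forall>x y z. mult (x + y) z = mult x z + mult y z) \<and>
     (\<forall>x y z. mult x (y + z) = mult x y + mult x z) \<and>
     (\<forall>c x y. mult (scale c x) y = scale c (mult x y)) \<and>
     (\<forall>c x y. mult x (scale c y) = scale c (mult x y)) \<and>
     (\<forall>x y z. mult x (mult y z) = mult (mult x y) z - mult (mult x z) y)"

definition setprod ::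
  "('f::field \<Rightarrow> 'v::ab_group_add \<Rightarrow> 'v) \<Rightarrow> ('v \<Rightarrow> 'v \<Rightarrow> 'v) \<Rightarrow> 'v set \<Rightarrow> 'v set \<Rightarrow> 'v set" where
  "setprod scale mult U V = module.span scale {mult u v | u v. u \<in> U \<and> v \<in> V}"

definition lideal ::
  "('f::field \<Rightarrow> 'v::ab_group_add \<Rightarrow> 'v) \<Rightarrow> ('v \<Rightarrow> 'v \<Rightarrow> 'v) \<Rightarrow> 'v set \<Rightarrow> bool" where
  "lideal scale mult B \<longleftrightarrow> module.subspace scale B \<and>
     (\<forall>x b. b \<in> B \<longrightarrow> mult x b \<in> B \<and> mult b x \<in> B)"

fun rpow ::
  "('f::field \<Rightarrow> 'v::ab_group_add \<Rightarrow> 'v) \<Rightarrow> ('v \<Rightarrow> 'v \<Rightarrow> 'v) \<Rightarrow> 'v set \<Rightarrow> nat \<Rightarrow> 'v set" where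
  "rpow scale mult B 0 = B"
| "rpow scale mult B (Suc 0) = B"
| "rpow scale mult B (Suc (Suc k)) = setprod scale mult (rpow scale mult B (Suc k)) B"

definition Ess ::
  "('f::field \<Rightarrow> 'v::ab_group_add \<Rightarrow> 'v) \<Rightarrow> ('v \<Rightarrow> 'v \<Rightarrow> 'v) \<Rightarrow> 'v set" where
  "Ess scale mult = \<Inter>{I. lideal scale mult I \<and> {mult x x | x. True} \<subseteq> I}"

definition Es ::
  "('f::field \<Rightarrow> 'v::ab_group_add \<Rightarrow> 'v) \<Rightarrow> ('v \<Rightarrow> 'v \<Rightarrow> 'v) \<Rightarrow> 'v set \<Rightarrow> 'v set" where
  "Es scale mult B = B \<inter> Ess scale mult"

definition Bsub ::
  "('f::field \<Rightarrow> 'v::ab_group_add \<Rightarrow> 'v) \<Rightarrow> ('v \<Rightarrow> 'v \<Rightarrow> 'v) \<Rightarrow> 'v set \<Rightarrow> nat \<Rightarrow> 'v set" where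
  "Bsub scale mult B k = (if k \<le> 1 then B else
     {x + y | x y. x \<in> rpow scale mult B k \<and> y \<in> Es scale mult B})"

text \<open>Right product a_m a_(m-1) ... a_1 = ((...(a_m a_(m-1))...)a_2)a_1 of the
  nonempty list [a_m, a_(m-1), ..., a_1].\<close>
definition rprod :: "('v \<Rightarrow> 'v \<Rightarrow> 'v) \<Rightarrow> 'v list \<Rightarrow> 'v" where
  "rprod mult xs = foldl mult (hd xs) (tl xs)"

end

theory Submission
  imports Defs
begin

lemma mult_zero_l:
  assumes L: "leibniz_algebra scale mult"
  shows "mult 0 x = 0"
proof -
  have "mult (0+0) x = mult 0 x + mult 0 x" using L unfolding leibniz_algebra_def by blast
  then show ?thesis by simp
qed

lemma rpow_right:
  assumes L: "leibniz_algebra scale mult" and I: "lideal scale mult B"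
  shows "u \<in> rpow scale mult B (Suc k) \<Longrightarrow> mult u x \<in> rpow scale mult B (Suc k)"
proof (induction k arbitrary: u x)
  case (0 u x) then show ?case using I by (simp add: lideal_def)
next
  case (Suc k u x)
  note 3 = Suc
  interpret vector_space scale using L unfolding leibniz_algebra_def by blast
  have ax: "\<forall>x y z. mult (x + y) z = mult x z + mult y z"
     "\<forall>c x y. mult (scale c x) y = scale c (mult x y)"
     "\<forall>x y z. mult x (mult y z) = mult (mult x y) z - mult (mult x z) y"
    using L unfolding leibniz_algebra_def by blast+
  let ?G = "{mult u v | u v. u \<in> rpow scale mult B (Suc k) \<and> v \<in> B}"
  have "u \<in> span ?G" using 3(2) by (simp add: setprod_def)
  then have "\<forall>x. mult u x \<in> span ?G"
  proof (induction rule: span_induct_alt)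
    case base then show ?case using mult_zero_l[OF L] span_zero by simp
  next
    case (step c g y)
    then obtain v b where g: "g = mult v b" "v \<in> rpow scale mult B (Suc k)" "b \<in> B" by blast
    show ?case
    proof
      fix x
      have e0: "mult v (mult b x) = mult g x - mult (mult v x) b"
        unfolding g(1) by (rule ax(3)[rule_format])
      have e: "mult g x = mult v (mult b x) + mult (mult v x) b"
        using e0 by (metis diff_add_cancel)
      have "mult b x \<in> B" using I g(3) by (simp add: lideal_def)
      then have 1: "mult v (mult b x) \<in> span ?G" using g(2) by (intro span_base) blast
      have "mult v x \<in> rpow scale mult B (Suc k)" using 3(1) g(2) by blast
      then have 2: "mult (mult v x) b \<in> span ?G" using g(3) by (intro span_base) blast
      have "mult g x \<in> span ?G" using e 1 2 span_add by simp
      have e2: "mult (scale c g + y) x = scale c (mult g x) + mult y x"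
        using ax(1,2) by simp
      have "mult y x \<in> span ?G" using step(2) by blast
      then show "mult (scale c g + y) x \<in> span ?G"
        unfolding e2 using \<open>mult g x \<in> span ?G\<close> by (intro span_add span_scale)
    qed
  qed
  then show ?case by (simp add: setprod_def)
qed

lemma rprod_snoc: "xs \<noteq> [] \<Longrightarrow> rprod mult (xs @ [a]) = mult (rprod mult xs) a"
  by (cases xs) (auto simp: rprod_def)

lemma rpow_right':
  assumes L: "leibniz_algebra scale mult" and I: "lideal scale mult B"
  shows "u \<in> rpow scale mult B k \<Longrightarrow> mult u x \<in> rpow scale mult B k"
  using rpow_right[OF L I, of u "k - 1" x] I
  by (cases k) (auto simp: lideal_def)

lemma setprod_mem:
  assumes L: "leibniz_algebra scale mult" and "u \<in> U" "v \<in> V"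
  shows "mult u v \<in> setprod scale mult U V"
proof -
  interpret vector_space scale using L unfolding leibniz_algebra_def by blast
  show ?thesis unfolding setprod_def by (rule span_base) (use assms in blast)
qed

lemma main:
  assumes L: "leibniz_algebra scale mult" and I: "lideal scale mult B"
  shows "as \<noteq> [] \<Longrightarrow> n \<ge> 1 \<Longrightarrow> length (filter (\<lambda>a. a \<in> B) as) \<ge> n
     \<Longrightarrow> rprod mult as \<in> rpow scale mult B n"
proof (induction as arbitrary: n rule: rev_induct)
  case Nil then show ?case by simp
next
  case (snoc a xs n)
  show ?case
  proof (cases "xs = []")
    case True
    then have "a \<in> B" "n = 1" using snoc by (auto split: if_splits)
    then show ?thesis using True by (simp add: rprod_def)
  next
    case False
    note r = rprod_snoc[OF False, of mult a]
    show ?thesis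
    proof (cases "a \<in> B")
      case True
      show ?thesis
      proof (cases "n = 1")
        case True
        then show ?thesis using \<open>a \<in> B\<close> I r by (simp add: lideal_def)
      next
        case n: False
        then obtain m where m: "n = Suc (Suc m)" using snoc(3)
          by (metis One_nat_def Suc_le_D not_less_eq_eq le_antisym)
        have "rprod mult xs \<in> rpow scale mult B (Suc m)"
          using snoc(1)[OF False, of "Suc m"] snoc(4) True m by simp
        then show ?thesis using r m True setprod_mem[OF L] by simp
      qed
    next
      case False
      have "rprod mult xs \<in> rpow scale mult B n"
        using snoc(1)[OF \<open>xs \<noteq> []\<close> snoc(3)] snoc(4) False by simp
      then show ?thesis using r rpow_right'[OF L I] by simp
    qed
  qed
qed

theorem lemma4p2:
  fixes scale :: "'f::field \<Rightarrow> 'v::ab_group_add \<Rightarrow> 'v"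
    and mult :: "'v \<Rightarrow> 'v \<Rightarrow> 'v"
    and B :: "'v set" and as :: "'v list" and n :: nat
  assumes "leibniz_algebra scale mult"
    and "lideal scale mult B"
    and "B \<noteq> {0}"
    and "as \<noteq> []"
    and "n \<ge> 1"
    and "length (filter (\<lambda>a. a \<in> B) as) \<ge> n"
  shows "rprod mult as \<in> Bsub scale mult B n"
proof -
  interpret vector_space scale using assms(1) unfolding leibniz_algebra_def by blast
  have P: "rprod mult as \<in> rpow scale mult B n" using main[OF assms(1,2,4,5,6)] .
  have "0 \<in> Es scale mult B"
  proof -
    have "0 \<in> B" using assms(2) subspace_0 by (simp add: lideal_def)
    moreover have "0 \<in> Ess scale mult" unfolding Ess_def
      using subspace_0 by (auto simp: lideal_def)
    ultimately show ?thesis by (simp add: Es_def)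
  qed
  show ?thesis
  proof (cases "n \<le> 1")
    case True
    then have "n = 1" using assms(5) by simp
    then show ?thesis using P by (simp add: Bsub_def)
  next
    case False
    have "rprod mult as + 0 \<in> {x + y | x y. x \<in> rpow scale mult B n \<and> y \<in> Es scale mult B}"
      using P \<open>0 \<in> Es scale mult B\<close> by blast
    then show ?thesis using False unfolding Bsub_def by simp
  qed
qed

end
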